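(* Let $R$ be a commutative ring with identity, $\mathcal S$ an associative $R$-algebra with identity, $\mathcal M$ a $2$-torsion free bimodule over $\mathcal S$, $\delta$ a derivation on $\mathcal S$ and $f:\mathcal S\to\mathcal M$ a bimodule homomorphism over $\mathcal S$. If $D:\mathcal S\to\mathcal M$ is a Jordan $(\delta,f)$-derivation on $\mathcal M$ and $x,y\in\mathcal S$ satisfy $xy=yx$, then $D(xy)=D(x)y+f(x)\delta(y)$.
   Context: A derivation on $\mathcal S$ is an additive map $\delta$ with $\delta(ab)=\delta(a)b+a\delta(b)$. An additive map $D:\mathcal S\to\mathcal M$ is a Jordan $(\delta,f)$-derivation if $D(x^2)=D(x)x+f(x)\delta(x)$ for all $x\in\mathcal S$. $\mathcal M$ is $2$-torsion free if $2m=0$ implies $m=0$. *)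

theory Defs
  imports Main
begin

definition is_algebra :: "('r::comm_ring_1 \<Rightarrow> 's::ring_1 \<Rightarrow> 's) \<Rightarrow> bool" where
  "is_algebra sc \<longleftrightarrow>
     (\<forall>a x y. sc a (x + y) = sc a x + sc a y) \<and>
     (\<forall>a b x. sc (a + b) x = sc a x + sc b x) \<and>
     (\<forall>a b x. sc (a * b) x = sc a (sc b x)) \<and>
     (\<forall>x. sc 1 x = x) \<and>
     (\<forall>a x y. sc a (x * y) = sc a x * y) \<and>
     (\<forall>a x y. sc a (x * y) = x * sc a y)"

definition is_bimodule :: "('s::ring_1 \<Rightarrow> 'm::ab_group_add \<Rightarrow> 'm) \<Rightarrow> ('m \<Rightarrow> 's \<Rightarrow> 'm) \<Rightarrow> bool" where
  "is_bimodule lm rm \<longleftrightarrow>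
     (\<forall>a m n. lm a (m + n) = lm a m + lm a n) \<and>
     (\<forall>a b m. lm (a + b) m = lm a m + lm b m) \<and>
     (\<forall>a b m. lm (a * b) m = lm a (lm b m)) \<and>
     (\<forall>m. lm 1 m = m) \<and>
     (\<forall>a m n. rm (m + n) a = rm m a + rm n a) \<and>
     (\<forall>a b m. rm m (a + b) = rm m a + rm m b) \<and>
     (\<forall>a b m. rm m (a * b) = rm (rm m a) b) \<and>
     (\<forall>m. rm m 1 = m) \<and>
     (\<forall>a b m. rm (lm a m) b = lm a (rm m b))"

definition two_torsion_free :: "'m::ab_group_add itself \<Rightarrow> bool" where
  "two_torsion_free _ \<longleftrightarrow> (\<forall>m::'m. m + m = 0 \<longrightarrow> m = 0)"

definition additive :: "('a::ab_group_add \<Rightarrow> 'b::ab_group_add) \<Rightarrow> bool" where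
  "additive g \<longleftrightarrow> (\<forall>x y. g (x + y) = g x + g y)"

definition is_derivation :: "('s::ring_1 \<Rightarrow> 's) \<Rightarrow> bool" where
  "is_derivation d \<longleftrightarrow> additive d \<and> (\<forall>a b. d (a * b) = d a * b + a * d b)"

definition is_bimodule_hom ::
  "('s::ring_1 \<Rightarrow> 'm::ab_group_add \<Rightarrow> 'm) \<Rightarrow> ('m \<Rightarrow> 's \<Rightarrow> 'm) \<Rightarrow> ('s \<Rightarrow> 'm) \<Rightarrow> bool" where
  "is_bimodule_hom lm rm f \<longleftrightarrow> additive f \<and>
     (\<forall>a x. f (a * x) = lm a (f x)) \<and> (\<forall>x a. f (x * a) = rm (f x) a)"

definition is_jordan_delta_f_derivation ::
  "('m::ab_group_add \<Rightarrow> 's::ring_1 \<Rightarrow> 'm) \<Rightarrow> ('s \<Rightarrow> 's) \<Rightarrow> ('s \<Rightarrow> 'm) \<Rightarrow> ('s \<Rightarrow> 'm) \<Rightarrow> bool" where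
  "is_jordan_delta_f_derivation rm d f D \<longleftrightarrow> additive D \<and>
     (\<forall>x. D (x * x) = rm (D x) x + rm (f x) (d x))"

end

theory Submission
  imports Defs
begin

theorem lemma3p9:
  fixes sc :: "'r::comm_ring_1 \<Rightarrow> 's::ring_1 \<Rightarrow> 's"
    and lm :: "'s \<Rightarrow> 'm::ab_group_add \<Rightarrow> 'm"
    and rm :: "'m \<Rightarrow> 's \<Rightarrow> 'm"
    and \<delta> :: "'s \<Rightarrow> 's"
    and f D :: "'s \<Rightarrow> 'm"
    and x y :: 's
  assumes "is_algebra sc"
    and "is_bimodule lm rm"
    and "two_torsion_free TYPE('m)"
    and "is_derivation \<delta>"
    and "is_bimodule_hom lm rm f"
    and "is_jordan_delta_f_derivation rm \<delta> f D"
    and "x * y = y * x"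
  shows "D (x * y) = rm (D x) y + rm (f x) (\<delta> y)"
proof -
  have rl: "\<And>m n a. rm (m + n) a = rm m a + rm n a"
   and rr: "\<And>m a b. rm m (a + b) = rm m a + rm m b"
   and rmul: "\<And>m a b. rm m (a * b) = rm (rm m a) b"
   and r1: "\<And>m. rm m 1 = m"
    using assms(2) unfolding is_bimodule_def by auto
  have r0: "\<And>m. rm m 0 = 0"
  proof -
    fix m have "rm m (0 + 0) = rm m 0 + rm m 0" by (rule rr)
    then show "rm m 0 = 0" by simp
  qed
  have dadd: "\<And>a b. \<delta> (a + b) = \<delta> a + \<delta> b"
   and dmul: "\<And>a b. \<delta> (a * b) = \<delta> a * b + a * \<delta> b"
    using assms(4) unfolding is_derivation_def additive_def by auto
  have fadd: "\<And>a b. f (a + b) = f a + f b"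
   and fr: "\<And>a b. f (a * b) = rm (f a) b"
    using assms(5) unfolding is_bimodule_hom_def additive_def by auto
  have Dadd: "\<And>a b. D (a + b) = D a + D b"
   and Dsq: "\<And>a. D (a * a) = rm (D a) a + rm (f a) (\<delta> a)"
    using assms(6) unfolding is_jordan_delta_f_derivation_def additive_def by auto
  have d1: "\<delta> 1 = 0" using dmul[of 1 1] by simp
  have key: "\<And>b. D b = rm (D 1) b + rm (f 1) (\<delta> b)"
  proof -
    fix b
    have "D ((b + 1) * (b + 1)) = D (b * b) + D b + D b + D 1"
      by (simp add: distrib_left distrib_right Dadd add.assoc)
    also have "\<dots> = rm (D b) b + rm (f b) (\<delta> b) + D b + D b + D 1"
      using Dsq[of b] by simp
    finally have A: "D ((b + 1) * (b + 1)) = rm (D b) b + rm (f b) (\<delta> b) + D b + D b + D 1" .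
    have "D ((b + 1) * (b + 1)) = rm (D (b+1)) (b+1) + rm (f (b+1)) (\<delta> (b+1))"
      by (rule Dsq)
    also have "\<dots> = rm (D b) b + D b + rm (D 1) b + D 1 + rm (f b) (\<delta> b) + rm (f 1) (\<delta> b)"
      using Dsq[of 1] by (simp add: Dadd fadd dadd rl rr r1 r0 d1 add_ac)
    finally have B: "D ((b + 1) * (b + 1)) = rm (D b) b + D b + rm (D 1) b + D 1 + rm (f b) (\<delta> b) + rm (f 1) (\<delta> b)" .
    from A B show "D b = rm (D 1) b + rm (f 1) (\<delta> b)"
      by (simp add: add_ac)
  qed
  have "D (x * y) = rm (D 1) (x * y) + rm (f 1) (\<delta> x * y + x * \<delta> y)"
    using key[of "x * y"] dmul[of x y] by simp
  also have "\<dots> = rm (rm (D 1) x + rm (f 1) (\<delta> x)) y + rm (rm (f 1) x) (\<delta> y)"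
    by (simp add: rr rl rmul)
  also have "\<dots> = rm (D x) y + rm (f x) (\<delta> y)"
    using key[of x] fr[of 1 x] by (simp only: mult_1_left)
  finally show ?thesis .
qed

end
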